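(* Let $0<\omega\le\pi/2$ and let $\mathcal{O}$ be a convex polygon with exactly $3$ narrow vertices. Then for every valid $\omega$-probe $\mathcal{W}(\omega,q,H_1,H_2)$ of $\mathcal{O}$, at least one of the rays $H_1,H_2$ contains a narrow vertex of $\mathcal{O}$.
   Context: A vertex of a convex polygon $\mathcal{O}$ is a narrow vertex if the internal angle of $\mathcal{O}$ at that vertex is at most $\omega$. An $\omega$-wedge $\mathcal{W}(\omega,q,H_1,H_2)$ is the closed region formed by a point $q$ (the apex), two rays $H_1,H_2$ emanating from $q$ with angle $\omega$ between them such that $H_2$ is obtained from $H_1$ by a counterclockwise rotation by $\omega$, and all points between them. A valid $\omega$-probe of $\mathcal{O}$ is an $\omega$-wedge containing $\mathcal{O}$ such that each of $H_1$ and $H_2$ contains at least one point of $\mathcal{O}$. *)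

theory Defs
  imports "HOL-Analysis.Analysis"
begin

text \<open>A convex polygon is given by
  its list of vertices in counterclockwise order; strict convexity means every
  other vertex lies strictly to the left of each directed edge.\<close>

definition cross2 :: "complex \<Rightarrow> complex \<Rightarrow> real" where
  "cross2 a b = Im (cnj a * b)"

definition vec_angle :: "complex \<Rightarrow> complex \<Rightarrow> real" where
  "vec_angle u v = arccos ((u \<bullet> v) / (norm u * norm v))"

definition convex_polygon :: "complex list \<Rightarrow> bool" where
  "convex_polygon vs \<longleftrightarrow> length vs \<ge> 3 \<and> distinct vs \<and>
     (\<forall>i < length vs. \<forall>j < length vs. j \<noteq> i \<and> j \<noteq> Suc i mod length vs \<longrightarrow>
        cross2 (vs ! (Suc i mod length vs) - vs ! i) (vs ! j - vs ! i) > 0)"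

definition polygon_region :: "complex list \<Rightarrow> complex set" where
  "polygon_region vs = convex hull (set vs)"

definition prev_idx :: "complex list \<Rightarrow> nat \<Rightarrow> nat" where
  "prev_idx vs i = (i + length vs - 1) mod length vs"

definition next_idx :: "complex list \<Rightarrow> nat \<Rightarrow> nat" where
  "next_idx vs i = Suc i mod length vs"

definition internal_angle :: "complex list \<Rightarrow> nat \<Rightarrow> real" where
  "internal_angle vs i =
     vec_angle (vs ! prev_idx vs i - vs ! i) (vs ! next_idx vs i - vs ! i)"

definition narrow_vertex :: "real \<Rightarrow> complex list \<Rightarrow> nat \<Rightarrow> bool" where
  "narrow_vertex \<omega> vs i \<longleftrightarrow> i < length vs \<and> internal_angle vs i \<le> \<omega>"

definition ray :: "complex \<Rightarrow> complex \<Rightarrow> complex set" where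
  "ray q d = {q + of_real t * d | t. t \<ge> 0}"

text \<open>The \<omega>-wedge with apex q, first ray in direction d (nonzero) and second ray
  obtained by counterclockwise rotation by \<omega> (for 0 < \<omega> < pi this is the
  closed region between the two rays).\<close>
definition wedge :: "real \<Rightarrow> complex \<Rightarrow> complex \<Rightarrow> complex set" where
  "wedge \<omega> q d = {q + of_real s * d + of_real t * (d * cis \<omega>) | s t. s \<ge> 0 \<and> t \<ge> 0}"

definition valid_probe :: "real \<Rightarrow> complex list \<Rightarrow> complex \<Rightarrow> complex \<Rightarrow> bool" where
  "valid_probe \<omega> vs q d \<longleftrightarrow> d \<noteq> 0 \<and>
     polygon_region vs \<subseteq> wedge \<omega> q d \<and>
     ray q d \<inter> polygon_region vs \<noteq> {} \<and>
     ray q (d * cis \<omega>) \<inter> polygon_region vs \<noteq> {}"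

end

theory Submission
  imports Defs
begin


lemma inner_cnj: "(x::complex) \<bullet> y = Re (cnj x * y)"
  by (simp add: inner_complex_def)

lemma cross2_inner: "cross2 a b = (\<i> * a) \<bullet> b"
  by (simp add: cross2_def inner_complex_def)

lemma cross2_identity:
  "cross2 u v * (n \<bullet> w) = cross2 w v * (n \<bullet> u) + cross2 u w * (n \<bullet> v)"
  by (simp add: cross2_def inner_complex_def algebra_simps)

lemma cross2_swap: "cross2 a b = - cross2 b a"
  by (simp add: cross2_def algebra_simps)

lemma cross2_diff_right: "cross2 a (b - c) = cross2 a b - cross2 a c"
  by (simp add: cross2_def algebra_simps)
lemma cross2_add_right: "cross2 a (b + c) = cross2 a b + cross2 a c"
  by (simp add: cross2_def algebra_simps)
lemma cross2_scale_right: "cross2 a (of_real t * b) = t * cross2 a b"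
  by (simp add: cross2_def algebra_simps)
lemma cross2_scale_left: "cross2 (of_real t * a) b = t * cross2 a b"
  by (simp add: cross2_def algebra_simps)
lemma cross2_self: "cross2 a a = 0"
  by (simp add: cross2_def algebra_simps)
lemma cross2_mult: "cross2 (r * a) (r * b) = (cmod r)^2 * cross2 a b"
proof -
  have h: "(cmod r)^2 = Re r * Re r + Im r * Im r" using cmod_power2[of r] by (simp add: power2_eq_square)
  show ?thesis unfolding h by (simp add: cross2_def algebra_simps)
qed
lemma cross2_cis: "cross2 (of_real a * cis x) (of_real b * cis y) = a * b * sin (y - x)"
proof -
  show ?thesis by (simp add: cross2_def sin_diff algebra_simps)
qed

lemma inner_mult: "(r * a) \<bullet> (r * b) = (cmod r)^2 * (a \<bullet> b)"
proof -
  have h: "(cmod r)^2 = Re r * Re r + Im r * Im r" using cmod_power2[of r] by (simp add: power2_eq_square)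
  show ?thesis unfolding h by (simp add: inner_complex_def algebra_simps)
qed
lemma inner_cis: "(of_real a * cis x) \<bullet> (of_real b * cis y) = a * b * cos (y - x)"
proof -
  show ?thesis by (simp add: inner_complex_def cos_diff algebra_simps)
qed

lemma polar: assumes "r \<noteq> 0" "e \<noteq> 0"
  shows "\<exists>\<alpha> x. \<alpha> > 0 \<and> -pi < x \<and> x \<le> pi \<and> e = r * (of_real \<alpha> * cis x)"
proof -
  let ?z = "e / r"
  have "rcis (cmod ?z) (Arg ?z) = ?z" by (rule rcis_cmod_Arg)
  then have "e = r * (of_real (cmod ?z) * cis (Arg ?z))" using assms by (simp add: rcis_def)
  moreover have "cmod ?z > 0" using assms by simp
  ultimately show ?thesis using Arg_bounded by blast
qed



lemma cone_core:
  assumes "cross2 v u > 0" "cross2 v w > 0" "cross2 (- u) (w - u) > 0"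
    and "nv \<bullet> u \<le> 0" "nv \<bullet> v \<le> 0"
  shows "nv \<bullet> w \<le> 0" and "nv \<bullet> u < 0 \<Longrightarrow> nv \<bullet> v < 0 \<Longrightarrow> nv \<bullet> w < 0"
proof -
  have id: "cross2 u v * (nv \<bullet> w) = cross2 w v * (nv \<bullet> u) + cross2 u w * (nv \<bullet> v)"
    by (rule cross2_identity)
  have a: "cross2 u v < 0" using assms(1) cross2_swap[of u v] by simp
  have b: "cross2 w v < 0" using assms(2) cross2_swap[of w v] by simp
  have c: "cross2 u w < 0" using assms(3) by (simp add: cross2_def algebra_simps)
  have "cross2 w v * (nv \<bullet> u) \<ge> 0" using b assms(4) by (simp add: mult_nonpos_nonpos)
  moreover have "cross2 u w * (nv \<bullet> v) \<ge> 0" using c assms(5) by (simp add: mult_nonpos_nonpos)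
  ultimately have "cross2 u v * (nv \<bullet> w) \<ge> 0" using id by simp
  then show "nv \<bullet> w \<le> 0" using a by (simp add: mult_le_0_iff zero_le_mult_iff)
  assume s: "nv \<bullet> u < 0" "nv \<bullet> v < 0"
  have "cross2 w v * (nv \<bullet> u) > 0" using b s by (simp add: mult_neg_neg)
  moreover have "cross2 u w * (nv \<bullet> v) > 0" using c s by (simp add: mult_neg_neg)
  ultimately have "cross2 u v * (nv \<bullet> w) > 0" using id by simp
  then show "nv \<bullet> w < 0" using a by (simp add: zero_less_mult_iff)
qed

lemma prev_eq: assumes "i < length vs" shows "prev_idx vs i = (if i = 0 then length vs - 1 else i - 1)"
proof (cases "i = 0")
  case True then show ?thesis using assms by (simp add: prev_idx_def)
next
  case False
  then have e: "i + length vs - 1 = (i - 1) + length vs" by simp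
  have "((i - 1) + length vs) mod length vs = i - 1" using assms by simp
  then show ?thesis using False unfolding prev_idx_def e by simp
qed

lemma next_eq: assumes "i < length vs" shows "next_idx vs i = (if Suc i = length vs then 0 else Suc i)"
  using assms by (simp add: next_idx_def)

lemma idx_facts:
  assumes "convex_polygon vs" "i < length vs"
  shows "prev_idx vs i < length vs" "next_idx vs i < length vs"
    "prev_idx vs i \<noteq> i" "next_idx vs i \<noteq> i" "prev_idx vs i \<noteq> next_idx vs i"
    "next_idx vs (prev_idx vs i) = i"
proof -
  have n: "length vs \<ge> 3" using assms(1) by (simp add: convex_polygon_def)
  note p = prev_eq[OF assms(2)] and nx = next_eq[OF assms(2)]
  show "prev_idx vs i < length vs" using n assms(2) p by auto
  show "next_idx vs i < length vs" using n assms(2) nx by auto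
  show "prev_idx vs i \<noteq> i" using n assms(2) p by auto
  show "next_idx vs i \<noteq> i" using n assms(2) nx by auto
  show "prev_idx vs i \<noteq> next_idx vs i" using n assms(2) p nx by auto
  have "prev_idx vs i < length vs" using n assms(2) p by auto
  then show "next_idx vs (prev_idx vs i) = i" using next_eq[of "prev_idx vs i" vs] n assms(2) p
    by (cases "i = 0") auto
qed

lemma conv_at:
  assumes "convex_polygon vs" "k < length vs" "j < length vs" "j \<noteq> k" "j \<noteq> next_idx vs k"
  shows "cross2 (vs ! next_idx vs k - vs ! k) (vs ! j - vs ! k) > 0"
  using assms by (simp add: convex_polygon_def next_idx_def)

lemma local_global:
  assumes cv: "convex_polygon vs" and i: "i < length vs" and j: "j < length vs"
    and h1: "nv \<bullet> (vs ! prev_idx vs i - vs ! i) \<le> 0"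
    and h2: "nv \<bullet> (vs ! next_idx vs i - vs ! i) \<le> 0"
  shows "nv \<bullet> (vs ! j - vs ! i) \<le> 0"
    and "nv \<bullet> (vs ! prev_idx vs i - vs ! i) < 0 \<Longrightarrow> nv \<bullet> (vs ! next_idx vs i - vs ! i) < 0
         \<Longrightarrow> j \<noteq> i \<Longrightarrow> nv \<bullet> (vs ! j - vs ! i) < 0"
proof -
  note F = idx_facts[OF cv i]
  let ?P = "vs ! prev_idx vs i" and ?A = "vs ! i" and ?N = "vs ! next_idx vs i" and ?V = "vs ! j"
  have A: "cross2 (?N - ?A) (?P - ?A) > 0" using conv_at[OF cv i F(1) F(3) F(5)] .
  have gen: "nv \<bullet> (?V - ?A) \<le> 0 \<and> (nv \<bullet> (?P - ?A) < 0 \<longrightarrow> nv \<bullet> (?N - ?A) < 0 \<longrightarrow> nv \<bullet> (?V - ?A) < 0)"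
    if "j \<noteq> i" "j \<noteq> prev_idx vs i" "j \<noteq> next_idx vs i"
  proof -
    have B: "cross2 (?N - ?A) (?V - ?A) > 0" using conv_at[OF cv i j] that by simp
    have C0: "cross2 (vs ! next_idx vs (prev_idx vs i) - ?P) (?V - ?P) > 0"
      using conv_at[OF cv F(1) j] that F(6) by simp
    have C: "cross2 (- (?P - ?A)) ((?V - ?A) - (?P - ?A)) > 0" using C0 F(6) by simp
    show ?thesis using cone_core[OF A B C h1 h2] by blast
  qed
  show "nv \<bullet> (?V - ?A) \<le> 0"
  proof (cases "j = i \<or> j = prev_idx vs i \<or> j = next_idx vs i")
    case True then show ?thesis using h1 h2 by auto
  next
    case False then show ?thesis using gen by blast
  qed
  assume s: "nv \<bullet> (?P - ?A) < 0" "nv \<bullet> (?N - ?A) < 0" "j \<noteq> i"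
  show "nv \<bullet> (?V - ?A) < 0"
  proof (cases "j = prev_idx vs i \<or> j = next_idx vs i")
    case True then show ?thesis using s by auto
  next
    case False then show ?thesis using gen s by blast
  qed
qed

lemma hull_halfspace:
  assumes "\<forall>v\<in>set vs. nv \<bullet> (v - a) \<le> 0" "x \<in> polygon_region vs"
  shows "nv \<bullet> (x - a) \<le> 0"
proof -
  have "set vs \<subseteq> {x. nv \<bullet> x \<le> nv \<bullet> a}" using assms(1) by (auto simp: inner_diff_right)
  then have "convex hull (set vs) \<subseteq> {x. nv \<bullet> x \<le> nv \<bullet> a}"
    by (intro hull_minimal convex_halfspace_le)
  then show ?thesis using assms(2) by (auto simp: polygon_region_def inner_diff_right)
qed



lemma s_pos: "0 < y \<Longrightarrow> y < pi \<Longrightarrow> sin y > 0" by (rule sin_gt_zero)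
lemma s_nonneg: "0 \<le> y \<Longrightarrow> y \<le> pi \<Longrightarrow> sin y \<ge> 0" by (rule sin_ge_zero)
lemma s_neg: "-pi < y \<Longrightarrow> y < 0 \<Longrightarrow> sin y < 0"
  using sin_gt_zero[of "-y"] by simp
lemma s_nonpos: "-pi \<le> y \<Longrightarrow> y \<le> 0 \<Longrightarrow> sin y \<le> 0"
  using sin_ge_zero[of "-y"] by simp
lemma s_nonpos2: "pi \<le> y \<Longrightarrow> y \<le> 2*pi \<Longrightarrow> sin y \<le> 0"
  using sin_ge_zero[of "y - pi"] by (simp add: sin_diff)
lemma s_nonneg2: "-2*pi \<le> y \<Longrightarrow> y \<le> -pi \<Longrightarrow> sin y \<ge> 0"
  using sin_ge_zero[of "-y - pi"] by (simp add: sin_diff)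

lemma cos_bound: "0 < \<delta> \<Longrightarrow> \<delta> < pi \<Longrightarrow> 0 < \<omega> \<Longrightarrow> \<omega> < pi \<Longrightarrow> cos \<delta> \<le> - cos \<omega> \<Longrightarrow> pi - \<omega> \<le> \<delta>"
proof (rule ccontr)
  assume "0 < \<delta>" "\<delta> < pi" "0 < \<omega>" "\<omega> < pi" "cos \<delta> \<le> - cos \<omega>" "\<not> pi - \<omega> \<le> \<delta>"
  then have "cos (pi - \<omega>) < cos \<delta>" by (intro cos_monotone_0_pi) auto
  with \<open>cos \<delta> \<le> - cos \<omega>\<close> show False by simp
qed

lemma trig_main:
  fixes x1 x2 \<omega> h :: real
  assumes x1: "-pi < x1" "x1 \<le> pi" and x2: "-pi < x2" "x2 \<le> pi"
    and w: "0 < \<omega>" "\<omega> \<le> pi/2" and hdef: "2*h = pi + \<omega>"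
    and s: "sin (x2 - x1) > 0" and c: "cos (x2 - x1) \<le> - cos \<omega>"
    and C1: "sin (x1 + h) > 0 \<or> sin (x2 + h) < 0"
    and C2: "sin (x1 - h) > 0 \<or> sin (x2 - h) < 0"
  shows "-h < x1 \<and> x2 < h \<and> x1 < x2 \<and> pi - \<omega> \<le> x2 - x1 \<and> x2 - x1 < pi"
proof (cases "x1 < x2")
  case True
  have "x2 - x1 < pi"
  proof (rule ccontr)
    assume "\<not> ?thesis"
    then have "sin (x2 - x1) \<le> 0" using x1 x2 by (intro s_nonpos2) auto
    with s show False by simp
  qed
  then have d: "pi - \<omega> \<le> x2 - x1" using True w c by (intro cos_bound) auto
  have a: "-h < x1"
  proof (rule ccontr)
    assume "\<not> ?thesis"
    then have "-pi \<le> x1 + h \<and> x1 + h \<le> 0" using x1 hdef w pi_gt_zero by auto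
    then have "sin (x1 + h) \<le> 0" using s_nonpos by blast
    with C1 have "sin (x2 + h) < 0" by simp
    moreover have "sin (x2 + h) > 0" using \<open>\<not> -h < x1\<close> d x1 hdef w \<open>x2 - x1 < pi\<close>
      by (intro s_pos) auto
    ultimately show False by simp
  qed
  have b: "x2 < h"
  proof (rule ccontr)
    assume "\<not> ?thesis"
    then have "sin (x2 - h) \<ge> 0" using x2 hdef w by (intro s_nonneg) auto
    with C2 have "sin (x1 - h) > 0" by simp
    moreover have "sin (x1 - h) < 0" using \<open>\<not> x2 < h\<close> d x2 hdef w \<open>x2 - x1 < pi\<close>
      by (intro s_neg) auto
    ultimately show False by simp
  qed
  show ?thesis using a b d True \<open>x2 - x1 < pi\<close> by simp
next
  case False
  have "x2 - x1 < - pi"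
  proof (rule ccontr)
    assume "\<not> ?thesis"
    then have "sin (x2 - x1) \<le> 0" using False by (intro s_nonpos) auto
    with s show False by simp
  qed
  have "cos (x2 - x1 + 2*pi) \<le> - cos \<omega>" using c by simp
  then have d: "pi - \<omega> \<le> x2 - x1 + 2*pi" using \<open>x2 - x1 < - pi\<close> x1 x2 w
    by (intro cos_bound) auto
  have c1: "x1 + h < pi \<or> x2 + h < 0"
  proof -
    have "sin (x1 + h) \<le> 0" if "x1 + h \<ge> pi" using that x1 hdef w by (intro s_nonpos2) auto
    moreover have "sin (x2 + h) \<ge> 0" if "x2 + h \<ge> 0" using that x1 x2 hdef w
      \<open>x2 - x1 < - pi\<close> by (intro s_nonneg) auto
    ultimately show ?thesis using C1 by linarith
  qed
  have c2: "x1 > h \<or> x2 - h > - pi"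
  proof -
    have "sin (x1 - h) \<le> 0" if "x1 \<le> h" using that x1 hdef w \<open>x2 - x1 < - pi\<close> x2
      by (intro s_nonpos) auto
    moreover have "sin (x2 - h) \<ge> 0" if "x2 - h \<le> -pi" using that x2 hdef w
      by (intro s_nonneg2) auto
    ultimately show ?thesis using C2 by linarith
  qed
  from c1 c2 d \<open>x2 - x1 < - pi\<close> hdef w show ?thesis by auto
qed

lemma three_intervals:
  fixes a b :: "nat \<Rightarrow> real"
  assumes "\<And>k. k < 3 \<Longrightarrow> lo < a k \<and> b k < hi \<and> L \<le> b k - a k"
    and "\<And>k l. k < 3 \<Longrightarrow> l < 3 \<Longrightarrow> k \<noteq> l \<Longrightarrow> b k \<le> a l \<or> b l \<le> a k"
  shows "3 * L < hi - lo"
proof -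
  have "lo < a 0 \<and> b 0 < hi \<and> L \<le> b 0 - a 0" "lo < a 1 \<and> b 1 < hi \<and> L \<le> b 1 - a 1"
       "lo < a 2 \<and> b 2 < hi \<and> L \<le> b 2 - a 2" using assms(1) by auto
  moreover have "b 0 \<le> a 1 \<or> b 1 \<le> a 0" "b 0 \<le> a 2 \<or> b 2 \<le> a 0" "b 1 \<le> a 2 \<or> b 2 \<le> a 1"
    using assms(2) by auto
  ultimately show ?thesis by linarith
qed


lemma cross_d_dc: "cross2 d (d * cis w) = (cmod d)^2 * sin w"
  using cross2_mult[of d 1 "cis w"] by (simp add: cross2_def)

lemma cross_wedge1: "cross2 d (of_real a * d + of_real b * (d * cis w)) = b * (cmod d)^2 * sin w"
  by (simp add: cross2_add_right cross2_scale_right cross2_self cross_d_dc)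

lemma cross_wedge2: "cross2 (d * cis w) (of_real a * d + of_real b * (d * cis w)) = - a * (cmod d)^2 * sin w"
  using cross_d_dc[of d w] cross2_swap[of "d * cis w" d]
  by (simp add: cross2_add_right cross2_scale_right cross2_self)

lemma in_wedge:
  assumes "valid_probe \<omega> vs q d" "v \<in> set vs"
  obtains s t where "s \<ge> 0" "t \<ge> 0" "v = q + of_real s * d + of_real t * (d * cis \<omega>)"
proof -
  have "v \<in> polygon_region vs" using assms(2) by (simp add: polygon_region_def hull_inc)
  then have "v \<in> wedge \<omega> q d" using assms(1) by (auto simp: valid_probe_def)
  then show ?thesis using that unfolding wedge_def by blast
qed

lemma off_ray1:
  assumes cv: "convex_polygon vs" and vp: "valid_probe \<omega> vs q d"
    and w: "0 < \<omega>" "\<omega> < pi" and i: "i < length vs"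
    and nr: "vs ! i \<notin> ray q d"
  shows "cross2 d (vs ! i - vs ! prev_idx vs i) > 0 \<or> cross2 d (vs ! next_idx vs i - vs ! i) < 0"
proof (rule ccontr)
  let ?P = "vs ! prev_idx vs i" and ?A = "vs ! i" and ?N = "vs ! next_idx vs i"
  assume "\<not> ?thesis"
  then have h1: "cross2 d (?A - ?P) \<le> 0" and h2: "cross2 d (?N - ?A) \<ge> 0" by auto
  define nv where "nv = - (\<i> * d)"
  have nvx: "nv \<bullet> x = - cross2 d x" for x by (simp add: nv_def cross2_inner)
  have "cross2 d (?P - ?A) = - cross2 d (?A - ?P)" by (simp add: cross2_def algebra_simps)
  then have g1: "nv \<bullet> (?P - ?A) \<le> 0" using h1 nvx by simp
  have g2: "nv \<bullet> (?N - ?A) \<le> 0" using h2 nvx by simp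
  have "\<forall>v\<in>set vs. nv \<bullet> (v - ?A) \<le> 0"
    using local_global(1)[OF cv i _ g1 g2] by (auto simp: in_set_conv_nth)
  moreover obtain x where x: "x \<in> ray q d" "x \<in> polygon_region vs"
    using vp by (auto simp: valid_probe_def)
  ultimately have "nv \<bullet> (x - ?A) \<le> 0" using hull_halfspace by blast
  then have c: "cross2 d (x - ?A) \<ge> 0" using nvx by simp
  obtain t where t: "t \<ge> 0" "x = q + of_real t * d" using x(1) by (auto simp: ray_def)
  have "?A \<in> set vs" using i by simp
  then obtain s t' where st: "s \<ge> 0" "t' \<ge> 0" "?A = q + of_real s * d + of_real t' * (d * cis \<omega>)"
    using in_wedge[OF vp] by blast
  have eq: "x - ?A = of_real (t - s) * d + of_real (- t') * (d * cis \<omega>)"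
    using t st by (simp add: algebra_simps)
  have "cross2 d (x - ?A) = - t' * (cmod d)^2 * sin \<omega>" unfolding eq cross_wedge1 by simp
  moreover have "d \<noteq> 0" using vp by (simp add: valid_probe_def)
  moreover have "sin \<omega> > 0" using w by (simp add: sin_gt_zero)
  ultimately have "t' \<le> 0" using c
    by (smt (verit, best) mult_pos_pos zero_less_norm_iff zero_less_power mult_minus_left)
  then have "t' = 0" using st by simp
  then have "?A \<in> ray q d" using st by (auto simp: ray_def)
  with nr show False by simp
qed

lemma off_ray2:
  assumes cv: "convex_polygon vs" and vp: "valid_probe \<omega> vs q d"
    and w: "0 < \<omega>" "\<omega> < pi" and i: "i < length vs"
    and nr: "vs ! i \<notin> ray q (d * cis \<omega>)"
  shows "cross2 (d * cis \<omega>) (vs ! i - vs ! prev_idx vs i) < 0 \<or> cross2 (d * cis \<omega>) (vs ! next_idx vs i - vs ! i) > 0"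
proof (rule ccontr)
  let ?P = "vs ! prev_idx vs i" and ?A = "vs ! i" and ?N = "vs ! next_idx vs i"
  let ?e = "d * cis \<omega>"
  assume "\<not> ?thesis"
  then have h1: "cross2 ?e (?A - ?P) \<ge> 0" and h2: "cross2 ?e (?N - ?A) \<le> 0" by auto
  define nv where "nv = \<i> * ?e"
  have nvx: "nv \<bullet> x = cross2 ?e x" for x by (simp add: nv_def cross2_inner)
  have "cross2 ?e (?P - ?A) = - cross2 ?e (?A - ?P)" by (simp add: cross2_def algebra_simps)
  then have g1: "nv \<bullet> (?P - ?A) \<le> 0" using h1 nvx by simp
  have g2: "nv \<bullet> (?N - ?A) \<le> 0" using h2 nvx by simp
  have "\<forall>v\<in>set vs. nv \<bullet> (v - ?A) \<le> 0"
    using local_global(1)[OF cv i _ g1 g2] by (auto simp: in_set_conv_nth)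
  moreover obtain x where x: "x \<in> ray q ?e" "x \<in> polygon_region vs"
    using vp by (auto simp: valid_probe_def)
  ultimately have "nv \<bullet> (x - ?A) \<le> 0" using hull_halfspace by blast
  then have c: "cross2 ?e (x - ?A) \<le> 0" using nvx by simp
  obtain t where t: "t \<ge> 0" "x = q + of_real t * ?e" using x(1) by (auto simp: ray_def)
  have "?A \<in> set vs" using i by simp
  then obtain s t' where st: "s \<ge> 0" "t' \<ge> 0" "?A = q + of_real s * d + of_real t' * ?e"
    using in_wedge[OF vp] by blast
  have eq: "x - ?A = of_real (- s) * d + of_real (t - t') * ?e"
    using t st by (simp add: algebra_simps)
  have "cross2 ?e (x - ?A) = s * (cmod d)^2 * sin \<omega>" unfolding eq cross_wedge2 by simp
  moreover have "d \<noteq> 0" using vp by (simp add: valid_probe_def)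
  moreover have "sin \<omega> > 0" using w by (simp add: sin_gt_zero)
  ultimately have "s \<le> 0" using c
    by (smt (verit, best) mult_pos_pos zero_less_norm_iff zero_less_power)
  then have "s = 0" using st by simp
  then have "?A \<in> ray q ?e" using st by (auto simp: ray_def)
  with nr show False by simp
qed



lemma cross2_polar: "cross2 (r * (of_real a * cis x)) (r * (of_real b * cis y)) = (cmod r)^2 * a * b * sin (y - x)"
  by (simp add: cross2_mult cross2_cis)
lemma inner_polar: "(r * (of_real a * cis x)) \<bullet> (r * (of_real b * cis y)) = (cmod r)^2 * a * b * cos (y - x)"
  by (simp add: inner_mult inner_cis)

lemma pos_sign: "(K::real) > 0 \<Longrightarrow> (K * s > 0 \<longleftrightarrow> s > 0) \<and> (K * s < 0 \<longleftrightarrow> s < 0)"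
  by (simp add: zero_less_mult_iff mult_less_0_iff)

lemma narrow_interval:
  assumes cv: "convex_polygon vs" and vp: "valid_probe \<omega> vs q d"
    and w: "0 < \<omega>" "\<omega> \<le> pi/2" and nar: "narrow_vertex \<omega> vs i"
    and nr1: "vs ! i \<notin> ray q d" and nr2: "vs ! i \<notin> ray q (d * cis \<omega>)"
    and hdef: "2*h = pi + \<omega>"
  shows "\<exists>x1 x2. -h < x1 \<and> x2 < h \<and> pi - \<omega> \<le> x2 - x1 \<and>
     (\<forall>\<theta>. x1 < \<theta> \<longrightarrow> \<theta> < x2 \<longrightarrow> (\<forall>j<length vs. j \<noteq> i \<longrightarrow>
        (- (\<i> * (d * cis h * cis \<theta>))) \<bullet> (vs ! j - vs ! i) < 0))"
proof -
  have i: "i < length vs" using nar by (simp add: narrow_vertex_def)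
  note F = idx_facts[OF cv i]
  have wpi: "\<omega> < pi" using w pi_gt_zero by linarith
  let ?P = "vs ! prev_idx vs i" and ?A = "vs ! i" and ?N = "vs ! next_idx vs i"
  have dist: "distinct vs" using cv by (simp add: convex_polygon_def)
  have PA: "?A - ?P \<noteq> 0" using F i dist nth_eq_iff_index_eq by fastforce
  have NA: "?N - ?A \<noteq> 0" using F i dist nth_eq_iff_index_eq by fastforce
  have d0: "d \<noteq> 0" using vp by (simp add: valid_probe_def)
  define r where "r = d * cis h"
  have r0: "r \<noteq> 0" using d0 by (simp add: r_def)
  have rpos: "(cmod r)^2 > 0" using r0 by simp
  obtain a1 x1 where ax1: "a1 > 0" "-pi < x1" "x1 \<le> pi" "?A - ?P = r * (of_real a1 * cis x1)"
    using polar[OF r0 PA] by blast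
  obtain a2 x2 where ax2: "a2 > 0" "-pi < x2" "x2 \<le> pi" "?N - ?A = r * (of_real a2 * cis x2)"
    using polar[OF r0 NA] by blast
  have K: "(cmod r)^2 * a1 * a2 > 0" "(cmod r)^2 * 1 * a1 > 0" "(cmod r)^2 * 1 * a2 > 0"
    using rpos ax1 ax2 by simp_all
  have "cross2 (?A - ?P) (?N - ?A) = cross2 (?N - ?A) (?P - ?A)" by (simp add: cross2_def algebra_simps)
  also have "\<dots> > 0" using conv_at[OF cv i F(1) F(3) F(5)] .
  finally have "(cmod r)^2 * a1 * a2 * sin (x2 - x1) > 0" using ax1 ax2 by (simp add: cross2_polar)
  then have s: "sin (x2 - x1) > 0" using pos_sign[OF K(1)] by blast
  have ip: "(?P - ?A) \<bullet> (?N - ?A) = - ((cmod r)^2 * a1 * a2 * cos (x2 - x1))"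
  proof -
    have "(?P - ?A) \<bullet> (?N - ?A) = - ((?A - ?P) \<bullet> (?N - ?A))"
      by (simp add: inner_diff_left inner_diff_right)
    then show ?thesis using ax1 ax2 by (simp add: inner_polar)
  qed
  have n1: "norm (?P - ?A) = cmod r * a1"
    using ax1 by (simp add: norm_minus_commute[of ?P] norm_mult)
  have n2: "norm (?N - ?A) = cmod r * a2"
    using ax2 by (simp add: norm_mult)
  have "internal_angle vs i = arccos (- cos (x2 - x1))"
    unfolding internal_angle_def vec_angle_def ip n1 n2
    using r0 ax1 ax2 by (simp add: power2_eq_square field_simps)
  then have "arccos (- cos (x2 - x1)) \<le> arccos (cos \<omega>)"
    using nar w wpi by (simp add: narrow_vertex_def arccos_cos)
  then have c: "cos (x2 - x1) \<le> - cos \<omega>"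
    by (subst (asm) arccos_le_mono) auto
  have dr: "d = r * (of_real 1 * cis (-h))" by (simp add: r_def mult.assoc cis_mult)
  have dcr: "d * cis \<omega> = r * (of_real 1 * cis (\<omega> - h))"
    by (simp add: r_def mult.assoc cis_mult)
  have C1: "sin (x1 + h) > 0 \<or> sin (x2 + h) < 0"
  proof -
    have "cross2 d (?A - ?P) > 0 \<or> cross2 d (?N - ?A) < 0"
      using off_ray1[OF cv vp w(1) wpi i nr1] .
    moreover have "cross2 d (?A - ?P) = (cmod r)^2 * 1 * a1 * sin (x1 - -h)"
      unfolding ax1(4) by (subst dr) (rule cross2_polar)
    moreover have "cross2 d (?N - ?A) = (cmod r)^2 * 1 * a2 * sin (x2 - -h)"
      unfolding ax2(4) by (subst dr) (rule cross2_polar)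
    ultimately have "(cmod r)^2 * 1 * a1 * sin (x1 - -h) > 0 \<or> (cmod r)^2 * 1 * a2 * sin (x2 - -h) < 0"
      by simp
    then show ?thesis using pos_sign[OF K(2)] pos_sign[OF K(3)] by (simp add: mult.assoc)
  qed
  have C2: "sin (x1 - h) > 0 \<or> sin (x2 - h) < 0"
  proof -
    have sh: "sin (x - (\<omega> - h)) = - sin (x - h)" for x
    proof -
      have eq: "x - (\<omega> - h) = (x - h) + pi" using hdef by linarith
      have "sin (x - (\<omega> - h)) = sin ((x - h) + pi)" by (simp only: eq)
      then show ?thesis by simp
    qed
    have "cross2 (d * cis \<omega>) (?A - ?P) < 0 \<or> cross2 (d * cis \<omega>) (?N - ?A) > 0"
      using off_ray2[OF cv vp w(1) wpi i nr2] .
    moreover have "cross2 (d * cis \<omega>) (?A - ?P) = (cmod r)^2 * 1 * a1 * sin (x1 - (\<omega> - h))"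
      unfolding ax1(4) dcr by (rule cross2_polar)
    moreover have "cross2 (d * cis \<omega>) (?N - ?A) = (cmod r)^2 * 1 * a2 * sin (x2 - (\<omega> - h))"
      unfolding ax2(4) dcr by (rule cross2_polar)
    ultimately have "(cmod r)^2 * 1 * a1 * sin (x1 - (\<omega> - h)) < 0 \<or> (cmod r)^2 * 1 * a2 * sin (x2 - (\<omega> - h)) > 0"
      by simp
    then have "sin (x1 - (\<omega> - h)) < 0 \<or> sin (x2 - (\<omega> - h)) > 0"
      using pos_sign[OF K(2)] pos_sign[OF K(3)] by (simp add: mult.assoc)
    then show ?thesis unfolding sh by linarith
  qed
  have T: "-h < x1 \<and> x2 < h \<and> x1 < x2 \<and> pi - \<omega> \<le> x2 - x1 \<and> x2 - x1 < pi"
    using trig_main[OF ax1(2,3) ax2(2,3) w hdef s c C1 C2] .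
  have S: "(- (\<i> * (r * cis \<theta>))) \<bullet> (vs ! j - ?A) < 0"
    if th: "x1 < \<theta>" "\<theta> < x2" and j: "j < length vs" "j \<noteq> i" for \<theta> j
  proof -
    define nn where "nn = - (\<i> * (r * cis \<theta>))"
    have nnx: "nn \<bullet> z = - cross2 (r * (of_real 1 * cis \<theta>)) z" for z
      by (simp add: nn_def cross2_inner)
    have "nn \<bullet> (?A - ?P) = - ((cmod r)^2 * 1 * a1 * sin (x1 - \<theta>))"
      unfolding nnx ax1(4) cross2_polar ..
    moreover have "sin (x1 - \<theta>) < 0" using th T by (intro s_neg) auto
    ultimately have "nn \<bullet> (?A - ?P) > 0" using pos_sign[OF K(2)] by (simp add: mult.assoc)
    then have g1: "nn \<bullet> (?P - ?A) < 0" by (simp add: inner_diff_right)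
    have "nn \<bullet> (?N - ?A) = - ((cmod r)^2 * 1 * a2 * sin (x2 - \<theta>))"
      unfolding nnx ax2(4) cross2_polar ..
    moreover have "sin (x2 - \<theta>) > 0" using th T by (intro s_pos) auto
    ultimately have g2: "nn \<bullet> (?N - ?A) < 0" using pos_sign[OF K(3)] by (simp add: mult.assoc)
    show ?thesis using local_global(2)[OF cv i j(1) _ _ g1 g2 j(2)] g1 g2 by (simp add: nn_def)
  qed
  show ?thesis using T S by (auto simp: r_def)
qed



lemma sep:
  fixes f :: "real \<Rightarrow> complex"
  assumes S1: "\<forall>\<theta>. a < \<theta> \<longrightarrow> \<theta> < b \<longrightarrow> (\<forall>j<length vs. j \<noteq> i \<longrightarrow> f \<theta> \<bullet> (vs ! j - vs ! i) < 0)"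
    and S2: "\<forall>\<theta>. c < \<theta> \<longrightarrow> \<theta> < e \<longrightarrow> (\<forall>j<length vs. j \<noteq> k \<longrightarrow> f \<theta> \<bullet> (vs ! j - vs ! k) < 0)"
    and "i \<noteq> k" "i < length vs" "k < length vs" "a < b" "c < e"
  shows "b \<le> c \<or> e \<le> a"
proof (rule ccontr)
  assume nt: "\<not> (b \<le> c \<or> e \<le> a)"
  define \<theta> where "\<theta> = (max a c + min b e) / 2"
  have t: "a < \<theta>" "\<theta> < b" "c < \<theta>" "\<theta> < e" using nt assms(6,7)
    by (auto simp: \<theta>_def max_def min_def)
  have "f \<theta> \<bullet> (vs ! k - vs ! i) < 0" using S1 t assms by auto
  moreover have "f \<theta> \<bullet> (vs ! i - vs ! k) < 0" using S2 t assms by auto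
  ultimately show False by (simp add: inner_diff_right)
qed

theorem lemma6p1:
  fixes \<omega> :: real and vs :: "complex list" and q d :: complex
  assumes "0 < \<omega>" and "\<omega> \<le> pi / 2"
    and "convex_polygon vs"
    and "card {i. narrow_vertex \<omega> vs i} = 3"
    and "valid_probe \<omega> vs q d"
  shows "\<exists>i. narrow_vertex \<omega> vs i \<and> vs ! i \<in> ray q d \<union> ray q (d * cis \<omega>)"
proof (rule ccontr)
  assume H: "\<not> ?thesis"
  define h where "h = (pi + \<omega>) / 2"
  have hdef: "2 * h = pi + \<omega>" by (simp add: h_def)
  obtain i1 i2 i3 where I: "{i. narrow_vertex \<omega> vs i} = {i1, i2, i3}" "i1 \<noteq> i2" "i2 \<noteq> i3" "i1 \<noteq> i3"
    using assms(4) card_3_iff by metis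
  have N: "narrow_vertex \<omega> vs i1" "narrow_vertex \<omega> vs i2" "narrow_vertex \<omega> vs i3"
    using I(1) by blast+
  have L: "i1 < length vs" "i2 < length vs" "i3 < length vs"
    using N by (simp_all add: narrow_vertex_def)
  have R: "\<exists>x1 x2. -h < x1 \<and> x2 < h \<and> pi - \<omega> \<le> x2 - x1 \<and>
     (\<forall>\<theta>. x1 < \<theta> \<longrightarrow> \<theta> < x2 \<longrightarrow> (\<forall>j<length vs. j \<noteq> i \<longrightarrow>
        (- (\<i> * (d * cis h * cis \<theta>))) \<bullet> (vs ! j - vs ! i) < 0))"
    if "narrow_vertex \<omega> vs i" for i
    using narrow_interval[OF assms(3) assms(5) assms(1) assms(2) that _ _ hdef] H that by blast
  obtain a1 b1 where A1: "-h < a1" "b1 < h" "pi - \<omega> \<le> b1 - a1"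
    "\<forall>\<theta>. a1 < \<theta> \<longrightarrow> \<theta> < b1 \<longrightarrow> (\<forall>j<length vs. j \<noteq> i1 \<longrightarrow>
        (- (\<i> * (d * cis h * cis \<theta>))) \<bullet> (vs ! j - vs ! i1) < 0)"
    using R[OF N(1)] by blast
  obtain a2 b2 where A2: "-h < a2" "b2 < h" "pi - \<omega> \<le> b2 - a2"
    "\<forall>\<theta>. a2 < \<theta> \<longrightarrow> \<theta> < b2 \<longrightarrow> (\<forall>j<length vs. j \<noteq> i2 \<longrightarrow>
        (- (\<i> * (d * cis h * cis \<theta>))) \<bullet> (vs ! j - vs ! i2) < 0)"
    using R[OF N(2)] by blast
  obtain a3 b3 where A3: "-h < a3" "b3 < h" "pi - \<omega> \<le> b3 - a3"
    "\<forall>\<theta>. a3 < \<theta> \<longrightarrow> \<theta> < b3 \<longrightarrow> (\<forall>j<length vs. j \<noteq> i3 \<longrightarrow>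
        (- (\<i> * (d * cis h * cis \<theta>))) \<bullet> (vs ! j - vs ! i3) < 0)"
    using R[OF N(3)] by blast
  have wp: "pi - \<omega> > 0" using assms(1,2) pi_gt_zero by linarith
  have s12: "b1 \<le> a2 \<or> b2 \<le> a1" using sep[OF A1(4) A2(4) I(2) L(1,2)] A1(3) A2(3) wp by linarith
  have s13: "b1 \<le> a3 \<or> b3 \<le> a1" using sep[OF A1(4) A3(4) I(4) L(1,3)] A1(3) A3(3) wp by linarith
  have s23: "b2 \<le> a3 \<or> b3 \<le> a2" using sep[OF A2(4) A3(4) I(3) L(2,3)] A2(3) A3(3) wp by linarith
  have "3 * pi - 3 * \<omega> < 2 * h"
    using s12 s13 s23 A1(1-3) A2(1-3) A3(1-3) wp by (smt (verit))
  moreover have "2 * \<omega> \<le> pi" using assms(2) by simp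
  ultimately show False using hdef by linarith
qed


end
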